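(* As formal power series in $x$, $$\widehat B_1(x):=\frac{1}{\beta_1}\sum_{n\ge0}\beta_{n+1}x^n=\cfrac{1}{1+\cfrac{c_1x}{1+\cfrac{c_2x}{1+\cfrac{c_3x}{\ddots}}}}$$ where for $n\ge1$, $c_{2n-1}=\dfrac{q^n[n]_q^2[n+1]_q}{[2n]_q[2n+1]_q}$ and $c_{2n}=-\dfrac{[n]_q[n+1]_q^2}{[2n+1]_q[2n+2]_q}$.
   Context: $q$ is an indeterminate. The $q$-Bernoulli–Carlitz numbers $\beta_n\in\mathbb{Q}(q)$ are defined by: for all $n\ge0$, $q\sum_{k=0}^{n}\binom{n}{k}q^k\beta_k-\beta_n$ equals $q-1$ if $n=0$, $1$ if $n=1$, and $0$ if $n>1$ (so $\beta_1=-1/(q+1)$). $[m]_q=(q^m-1)/(q-1)$. *)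

theory Defs
  imports "HOL-Computational_Algebra.Computational_Algebra"
begin

type_synonym ratfun = "rat poly fract"

definition qvar :: ratfun where
  "qvar = Fract [:0, 1:] 1"

definition qint :: "nat \<Rightarrow> ratfun" where
  "qint m = (qvar ^ m - 1) / (qvar - 1)"

definition is_qBC :: "(nat \<Rightarrow> ratfun) \<Rightarrow> bool" where
  "is_qBC \<beta> \<longleftrightarrow> (\<forall>n. qvar * (\<Sum>k=0..n. of_nat (n choose k) * qvar ^ k * \<beta> k) - \<beta> n
      = (if n = 0 then qvar - 1 else if n = 1 then 1 else 0))"

definition cfc :: "nat \<Rightarrow> ratfun" where
  "cfc k = (if odd k then
             (let n = (k + 1) div 2 in
                qvar ^ n * qint n ^ 2 * qint (n + 1) / (qint (2*n) * qint (2*n + 1)))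
           else
             (let n = k div 2 in
                - (qint n * qint (n + 1) ^ 2 / (qint (2*n + 1) * qint (2*n + 2)))))"

text \<open>Truncated continued fraction:
  cfrac c i 0 = 1,  cfrac c i (m+1) = 1 / (1 + c_i x * cfrac c (i+1) m).
  So cfrac c 1 N = 1/(1 + c_1 x/(1 + ... /(1 + c_N x))).\<close>
fun cfrac :: "(nat \<Rightarrow> 'a::field) \<Rightarrow> nat \<Rightarrow> nat \<Rightarrow> 'a fps" where
  "cfrac c i 0 = 1"
| "cfrac c i (Suc m) = inverse (1 + fps_const (c i) * fps_X * cfrac c (Suc i) m)"

end

theory Submission
  imports Defs
begin


lemma qvar_to_fract: "qvar = to_fract [:0,1:]"
  by (simp add: qvar_def to_fract_def)

lemma qvar_pow: "qvar ^ n = to_fract (monom 1 n)"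
proof -
  have p: "to_fract (x ^ k) = (to_fract x) ^ k" for x :: "rat poly" and k by (induction k) auto
  have "to_fract ([:0,1:] ^ n) = (to_fract ([:0,1:]::rat poly)) ^ n" using p by blast
  thus ?thesis by (simp add: qvar_to_fract monom_altdef)
qed

lemma qvar_pow_eq_1: "qvar ^ n = 1 \<longleftrightarrow> n = 0"
proof -
  have "monom (1::rat) n = 1 \<longleftrightarrow> n = 0"
    by (metis degree_1 degree_monom_eq monom_eq_1 zero_neq_one)
  thus ?thesis by (metis qvar_pow to_fract_1 to_fract_eq_iff)
qed

lemma qvar_nz [simp]: "qvar \<noteq> 0"
  by (simp add: qvar_to_fract)

lemma qvar_pow_nz [simp]: "qvar ^ n \<noteq> 0" by simp

lemma qvar_ne1 [simp]: "qvar \<noteq> 1" using qvar_pow_eq_1[of 1] by simp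

lemma qvar_m1 [simp]: "qvar - 1 \<noteq> 0" by simp

lemma qvar_pow_m1 [simp]: assumes "n > 0" shows "qvar ^ n - 1 \<noteq> 0"
proof
  assume "qvar ^ n - 1 = 0"
  then have "qvar ^ n = 1" by simp
  with assms qvar_pow_eq_1[of n] show False by simp
qed

lemma qvar_pow_ne1 [simp]: "n > 0 \<Longrightarrow> qvar ^ n \<noteq> 1" using qvar_pow_eq_1[of n] by simp

lemma qint_nz [simp]: "n > 0 \<Longrightarrow> qint n \<noteq> 0" by (simp add: qint_def)
lemma qint_Suc_nz [simp]: "qint (Suc n) \<noteq> 0" by simp
lemma qint_0 [simp]: "qint 0 = 0" by (simp add: qint_def)

lemma qvar_pow_inj: "qvar ^ a = qvar ^ b \<longleftrightarrow> a = b"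
proof
  assume h: "qvar ^ a = qvar ^ b"
  show "a = b"
  proof (cases "a \<le> b")
    case True
    then have "qvar ^ b = qvar ^ a * qvar ^ (b - a)" by (simp add: power_add[symmetric])
    with h have "qvar ^ (b - a) = 1" by simp
    with True qvar_pow_eq_1 show ?thesis by simp
  next
    case False
    then have "qvar ^ a = qvar ^ b * qvar ^ (a - b)" by (simp add: power_add[symmetric])
    with h have "qvar ^ (a - b) = 1" by simp
    with False qvar_pow_eq_1 show ?thesis by simp
  qed
qed simp



definition Lf :: "(nat \<Rightarrow> ratfun) \<Rightarrow> ratfun poly \<Rightarrow> ratfun" where
  "Lf \<beta> p = (\<Sum>k\<le>degree p. coeff p k * \<beta> k)"

lemma Lf_upto: assumes "degree p \<le> n" shows "Lf \<beta> p = (\<Sum>k\<le>n. coeff p k * \<beta> k)"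
proof -
  have "(\<Sum>k\<le>n. coeff p k * \<beta> k) = (\<Sum>k\<le>degree p. coeff p k * \<beta> k)"
    by (rule sum.mono_neutral_right) (use assms in \<open>auto intro: coeff_eq_0 simp: not_le\<close>)
  thus ?thesis by (simp add: Lf_def)
qed

lemma Lf_add: "Lf \<beta> (p + r) = Lf \<beta> p + Lf \<beta> r"
proof -
  let ?n = "max (degree p) (degree r)"
  have "degree (p + r) \<le> ?n" by (rule degree_add_le) auto
  then have "Lf \<beta> (p + r) = (\<Sum>k\<le>?n. coeff (p + r) k * \<beta> k)" by (rule Lf_upto)
  also have "\<dots> = (\<Sum>k\<le>?n. coeff p k * \<beta> k) + (\<Sum>k\<le>?n. coeff r k * \<beta> k)"
    by (simp add: distrib_right sum.distrib)
  also have "\<dots> = Lf \<beta> p + Lf \<beta> r" by (simp add: Lf_upto[of p ?n] Lf_upto[of r ?n])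
  finally show ?thesis .
qed

lemma Lf_smult: "Lf \<beta> (smult c p) = c * Lf \<beta> p"
proof -
  have "Lf \<beta> (smult c p) = (\<Sum>k\<le>degree p. coeff (smult c p) k * \<beta> k)"
    by (rule Lf_upto) (rule degree_smult_le)
  thus ?thesis by (simp add: Lf_def sum_distrib_left mult.assoc)
qed

lemma Lf_0 [simp]: "Lf \<beta> 0 = 0" by (simp add: Lf_def)

lemma Lf_minus: "Lf \<beta> (- p) = - Lf \<beta> p"
  using Lf_smult[of \<beta> "-1" p] by simp

lemma Lf_diff: "Lf \<beta> (p - r) = Lf \<beta> p - Lf \<beta> r"
  using Lf_add[of \<beta> p "-r"] Lf_minus[of \<beta> r] by simp

lemma Lf_sum: "Lf \<beta> (\<Sum>i\<in>A. f i) = (\<Sum>i\<in>A. Lf \<beta> (f i))"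
  by (induction A rule: infinite_finite_induct) (auto simp: Lf_add)

lemma Lf_monom: "Lf \<beta> (monom c n) = c * \<beta> n"
proof -
  have "Lf \<beta> (monom c n) = (\<Sum>k\<le>n. coeff (monom c n) k * \<beta> k)"
    by (rule Lf_upto) (simp add: degree_monom_le)
  also have "\<dots> = (\<Sum>k\<le>n. if k = n then c * \<beta> k else 0)"
    by (rule sum.cong) (auto simp: coeff_monom)
  finally show ?thesis by simp
qed

lemma Lf_const: "Lf \<beta> [:c:] = c * \<beta> 0"
  using Lf_monom[of \<beta> c 0] by (simp add: monom_0)

lemma pcompose_monom_gen: "pcompose (monom c n) r = smult c (r ^ n)"
  by (induction n) (simp_all add: monom_0 monom_Suc pcompose_pCons mult.commute mult.left_commute)

lemma Lf_lin_power: "Lf \<beta> ([:1, qvar:] ^ n) = (\<Sum>k\<le>n. of_nat (n choose k) * qvar ^ k * \<beta> k)"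
proof -
  have "degree ([:1, qvar:] ^ n) \<le> n"
    using degree_power_le[of "[:1, qvar:]" n] by simp
  then have "Lf \<beta> ([:1, qvar:] ^ n) = (\<Sum>k\<le>n. coeff ([:1, qvar:] ^ n) k * \<beta> k)" by (rule Lf_upto)
  also have "\<dots> = (\<Sum>k\<le>n. of_nat (n choose k) * qvar ^ k * \<beta> k)"
    by (rule sum.cong) (simp_all add: coeff_linear_poly_power)
  finally show ?thesis .
qed

lemma Lf_char_monom:
  assumes "is_qBC \<beta>"
  shows "qvar * Lf \<beta> (pcompose (monom 1 n) [:1, qvar:]) - Lf \<beta> (monom 1 n)
     = (qvar - 1) * coeff (monom 1 n) 0 + coeff (monom 1 n) 1"
proof -
  have h: "qvar * (\<Sum>k=0..n. of_nat (n choose k) * qvar ^ k * \<beta> k) - \<beta> n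
      = (if n = 0 then qvar - 1 else if n = 1 then 1 else 0)"
    using assms unfolding is_qBC_def by blast
  have "{0..n} = {..n}" by auto
  with h show ?thesis
    by (auto simp: pcompose_monom_gen Lf_lin_power Lf_monom coeff_monom)
qed

lemma Lf_char:
  assumes "is_qBC \<beta>"
  shows "qvar * Lf \<beta> (pcompose p [:1, qvar:]) - Lf \<beta> p = (qvar - 1) * coeff p 0 + coeff p 1"
proof -
  have p: "p = (\<Sum>i\<le>degree p. smult (coeff p i) (monom 1 i))"
    by (simp add: smult_monom poly_as_sum_of_monoms)
  have "qvar * Lf \<beta> (pcompose p [:1, qvar:]) - Lf \<beta> p =
     (\<Sum>i\<le>degree p. coeff p i * (qvar * Lf \<beta> (pcompose (monom 1 i) [:1, qvar:]) - Lf \<beta> (monom 1 i)))"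
    apply (subst (1 2) p)
    apply (simp add: pcompose_sum pcompose_smult Lf_sum Lf_smult sum_distrib_left sum_subtractf algebra_simps)
    done
  also have "\<dots> = (\<Sum>i\<le>degree p. coeff p i * ((qvar - 1) * coeff (monom 1 i) 0 + coeff (monom 1 i) 1))"
    using Lf_char_monom[OF assms] by simp
  also have "\<dots> = (qvar - 1) * coeff p 0 + coeff p 1"
  proof -
    have "(\<Sum>i\<le>degree p. coeff p i * ((qvar - 1) * coeff (monom 1 i) 0 + coeff (monom 1 i) 1))
        = (\<Sum>i\<le>degree p. coeff (smult (coeff p i) (monom 1 i)) 0 * (qvar - 1) + coeff (smult (coeff p i) (monom 1 i)) 1)"
      by (rule sum.cong) (auto simp: algebra_simps)
    also have "\<dots> = coeff (\<Sum>i\<le>degree p. smult (coeff p i) (monom 1 i)) 0 * (qvar - 1) + coeff (\<Sum>i\<le>degree p. smult (coeff p i) (monom 1 i)) 1"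
      by (simp add: coeff_sum sum.distrib sum_distrib_right)
    finally show ?thesis using p[symmetric] by (simp add: algebra_simps)
  qed
  finally show ?thesis .
qed



abbreviation q where "q \<equiv> qvar"

fun qf :: "nat \<Rightarrow> ratfun" where
  "qf 0 = 1" | "qf (Suc n) = qf n * qint (Suc n)"

definition nq :: "nat \<Rightarrow> ratfun" where "nq i = - qint i / q ^ i"

fun pin :: "nat \<Rightarrow> ratfun" where
  "pin 0 = 1" | "pin (Suc n) = pin n * nq (Suc n)"

fun posb :: "nat \<Rightarrow> ratfun poly" where
  "posb 0 = 1" | "posb (Suc k) = posb k * [:qint (Suc k), q ^ Suc k:]"

fun negb :: "nat \<Rightarrow> ratfun poly" where
  "negb 0 = 1" | "negb (Suc k) = negb k * [:nq (Suc k), 1 / q ^ Suc k:]"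

lemma qint_Suc: "qint (Suc i) = qint i + q ^ i"
  unfolding qint_def by (simp add: power_add divide_simps) (simp add: algebra_simps)

lemma qint_1 [simp]: "qint (Suc 0) = 1" by (simp add: qint_def)

lemma qint_add: "qint (a + b) = qint a + q ^ a * qint b"
  unfolding qint_def by (simp add: power_add divide_simps) (simp add: algebra_simps)

lemma qf_nz [simp]: "qf n \<noteq> 0" by (induction n) auto

lemma E1: "pcompose [:qint i, q ^ i:] [:1, q:] = [:qint (Suc i), q ^ Suc i:]"
  by (simp add: pcompose_pCons qint_Suc algebra_simps)

lemma nq_0 [simp]: "nq 0 = 0" by (simp add: nq_def)

lemma E2: "pcompose [:nq (Suc i), 1 / q ^ Suc i:] [:1, q:] = [:nq i, 1 / q ^ i:]"
  unfolding nq_def qint_def by (simp add: pcompose_pCons power_add divide_simps) (simp add: algebra_simps)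

lemma E3: "pcompose (pCons 0 (posb k)) [:1, q:] = posb (Suc k)"
proof (induction k)
  case 0 then show ?case by (simp add: pcompose_pCons pcompose_1)
next
  case (Suc k)
  have "pCons 0 (posb (Suc k)) = pCons 0 (posb k) * [:qint (Suc k), q ^ Suc k:]" by simp
  then have "pcompose (pCons 0 (posb (Suc k))) [:1, q:] = posb (Suc k) * [:qint (Suc (Suc k)), q ^ Suc (Suc k):]"
    by (simp only: pcompose_mult Suc E1)
  then show ?case by simp
qed

lemma E4: "pcompose (negb (Suc j)) [:1, q:] = pCons 0 (negb j)"
proof (induction j)
  case 0 then show ?case using E2[of 0] by simp
next
  case (Suc j)
  have "pcompose (negb (Suc (Suc j))) [:1, q:] = pCons 0 (negb j) * [:nq (Suc j), 1 / q ^ Suc j:]"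
    by (simp only: negb.simps(2)[of "Suc j"] pcompose_mult Suc E2)
  then show ?case by simp
qed

lemma posb_coeff0: "coeff (posb k) 0 = qf k" by (induction k) (auto simp: coeff_mult_0)
lemma negb_coeff0: "coeff (negb k) 0 = pin k" by (induction k) (auto simp: coeff_mult_0)

lemma posb_Suc_split: "posb (Suc k) = smult (qint (Suc k)) (posb k) + smult (q ^ Suc k) (pCons 0 (posb k))"
  by (simp add: mult.commute)



definition Am :: "(nat \<Rightarrow> ratfun) \<Rightarrow> nat \<Rightarrow> nat \<Rightarrow> ratfun" where
  "Am \<beta> j k = Lf \<beta> (pCons 0 (negb j * posb k))"

definition gam :: "nat \<Rightarrow> ratfun" where "gam j = - pin j * qint (Suc j)"

lemma qp1_nz: "q + 1 \<noteq> 0"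
  proof
    assume "q + 1 = 0"
    then have "q = -1" by (simp add: eq_neg_iff_add_eq_0)
    then have "q ^ 2 = (-1) ^ 2" by (rule arg_cong)
    then have "q ^ 2 = 1" by (simp del: qvar_pow_ne1)
    then show False using qvar_pow_eq_1[of 2] by simp
  qed

context fixes \<beta> :: "nat \<Rightarrow> ratfun" assumes qbc: "is_qBC \<beta>"
begin

lemma beta0: "\<beta> 0 = 1"
proof -
  have "q * (\<Sum>k=0..0. of_nat (0 choose k) * q ^ k * \<beta> k) - \<beta> 0 = q - 1"
    using qbc unfolding is_qBC_def by (metis (no_types, lifting))
  then have "(q - 1) * \<beta> 0 = (q - 1) * 1" by (simp add: algebra_simps)
  then show ?thesis by simp
qed

lemma beta1: "\<beta> 1 = - 1 / (q + 1)"
proof -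
  have "q * (\<Sum>k=0..1. of_nat (1 choose k) * q ^ k * \<beta> k) - \<beta> 1 = 1"
    using qbc unfolding is_qBC_def by (metis (no_types, lifting) one_neq_zero)
  then have e: "q * (\<beta> 0 + q * \<beta> 1) - \<beta> 1 = 1" by simp
  have "q + 1 \<noteq> 0" by (rule qp1_nz)
  moreover have "(q + 1) * \<beta> 1 = - 1" using e beta0 
  proof -
    have "(q - 1) * ((q + 1) * \<beta> 1 + 1) = 0" using e beta0 by (simp add: algebra_simps)
    then show ?thesis by simp
  qed
  ultimately show ?thesis by (simp add: field_simps)
qed

lemma beta1_nz: "\<beta> 1 \<noteq> 0" using beta1 qp1_nz by simp

lemma Lf_one: "Lf \<beta> 1 = 1"
  using Lf_const[of \<beta> 1] beta0 by (simp add: pCons_one)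

lemma Cpos: "q * Lf \<beta> (posb (Suc k)) - Lf \<beta> (pCons 0 (posb k)) = qf k"
  using Lf_char[OF qbc, of "pCons 0 (posb k)"] by (simp add: E3 posb_coeff0)

lemma Cneg: "q * Am \<beta> j (Suc k) - Am \<beta> (Suc j) k = pin (Suc j) * qf k"
proof -
  have h: "pCons 0 (negb (Suc j) * posb k) = negb (Suc j) * pCons 0 (posb k)" by simp
  have "pcompose (pCons 0 (negb (Suc j) * posb k)) [:1, q:] = pCons 0 (negb j * posb (Suc k))"
    unfolding h pcompose_mult E3 E4 by simp
  then show ?thesis
    using Lf_char[OF qbc, of "pCons 0 (negb (Suc j) * posb k)"]
    by (simp add: Am_def coeff_mult_0 posb_coeff0 negb_coeff0)
qed

lemma Bm_closed: "Lf \<beta> (posb k) = qf k / qint (Suc k)"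
proof (induction k)
  case 0 then show ?case by (simp add: Lf_one)
next
  case (Suc k)
  define X where "X = Lf \<beta> (posb (Suc k))"
  define Y where "Y = Lf \<beta> (pCons 0 (posb k))"
  have e1: "q * X - Y = qf k" using Cpos unfolding X_def Y_def .
  have e2: "X = qint (Suc k) * Lf \<beta> (posb k) + q ^ Suc k * Y"
    unfolding X_def Y_def by (subst posb_Suc_split) (simp add: Lf_add Lf_smult del: smult_pCons)
  have Y: "Y = q * X - qf k" using e1 by simp
  have h: "X = qf k + q ^ Suc k * (q * X - qf k)" using e2 Suc Y by simp
  have "X * (1 - q ^ Suc (Suc k)) = qf k * (1 - q ^ Suc k)"
  proof -
    have "X * (1 - q ^ Suc (Suc k)) = X - q * q ^ Suc k * X" by (simp add: algebra_simps)
    also have "\<dots> = (qf k + q ^ Suc k * (q * X - qf k)) - q * q ^ Suc k * X" using h by simp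
    also have "\<dots> = qf k * (1 - q ^ Suc k)" by (simp add: algebra_simps)
    finally show ?thesis .
  qed
  then have "X = qf k * (1 - q ^ Suc k) / (1 - q ^ Suc (Suc k))"
  proof -
    have nz2: "q * (q * q ^ k) \<noteq> 1" by (metis power_Suc zero_less_Suc qvar_pow_ne1)
    show ?thesis using \<open>X * (1 - q ^ Suc (Suc k)) = qf k * (1 - q ^ Suc k)\<close> nz2
      by (simp add: eq_divide_eq)
  qed
  also have "\<dots> = qf (Suc k) / qint (Suc (Suc k))"
  proof -
    have a: "1 - q ^ Suc (Suc k) \<noteq> 0" "q ^ Suc (Suc k) - 1 \<noteq> 0" using qvar_pow_ne1[of "Suc (Suc k)"] by auto
    have "qf k * (1 - q ^ Suc k) / (1 - q ^ Suc (Suc k)) = qf k * (q ^ Suc k - 1) / (q ^ Suc (Suc k) - 1)"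
      using a by (simp add: divide_simps) (simp add: algebra_simps)
    then show ?thesis using a by (simp add: qint_def)
  qed
  finally show ?case unfolding X_def .
qed

lemma A0_closed: "Am \<beta> 0 k = - qf k / qint (Suc (Suc k))"
proof -
  have "Am \<beta> 0 k = q * Lf \<beta> (posb (Suc k)) - qf k" using Cpos[of k] by (simp add: Am_def)
  also have "\<dots> = q * (qf k * qint (Suc k) / qint (Suc (Suc k))) - qf k" by (simp only: Bm_closed qf.simps)
  also have "\<dots> = - qf k / qint (Suc (Suc k))"
    using qvar_pow_ne1[of "Suc (Suc k)"] qvar_pow_ne1[of "Suc k"]
    unfolding qint_def by (simp add: divide_simps power_add del: qvar_pow_ne1) (simp add: algebra_simps)
  finally show ?thesis .
qed

lemma A_closed: "Am \<beta> j k = gam j * qf k / qint (j + k + 2)"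
proof (induction j arbitrary: k)
  case 0 then show ?case using A0_closed by (simp add: gam_def)
next
  case (Suc j)
  have "Am \<beta> (Suc j) k = q * Am \<beta> j (Suc k) - pin (Suc j) * qf k" using Cneg[of j k] by simp
  also have "\<dots> = q * (gam j * qf (Suc k) / qint (j + Suc k + 2)) - pin j * nq (Suc j) * qf k"
    using Suc[of "Suc k"] by simp
  also have "\<dots> = gam (Suc j) * qf k / qint (Suc j + k + 2)"
    using qvar_pow_ne1[of "Suc (Suc (Suc (j + k)))"] qvar_pow_ne1[of "Suc j"] qvar_pow_ne1[of "Suc (Suc j)"] qvar_pow_ne1[of "Suc k"]
    unfolding gam_def pin.simps qf.simps nq_def qint_def
    by (simp add: divide_simps power_add del: qvar_pow_ne1) (simp add: algebra_simps)
  finally show ?case .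
qed

end


lemma cfc_odd: "cfc (2*m+1) = q^(m+1) * qint (m+1) ^ 2 * qint (m+2) / (qint (2*m+2) * qint (2*m+3))"
proof -
  have "(2*m+1+1) div 2 = m + 1" by simp
  then show ?thesis by (simp add: cfc_def Let_def algebra_simps) (simp add: numeral_eq_Suc)
qed

lemma cfc_even: "cfc (2*m+2) = - (qint (m+1) * qint (m+2) ^ 2 / (qint (2*m+3) * qint (2*m+4)))"
proof -
  have "(2*m+2) div 2 = m + 1" by simp
  then show ?thesis by (simp add: cfc_def Let_def algebra_simps) (simp add: numeral_eq_Suc)
qed

fun alp :: "nat \<Rightarrow> ratfun" where
  "alp 0 = 1"
| "alp (Suc m) = alp m * (qint (2*m+3) * qint (2*m+4)) / (q^(m+2) * qint (m+2) * qint (m+1)^2)"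

definition bet :: "nat \<Rightarrow> ratfun" where
  "bet m = - (alp m * qint (2*m+3) / (q^(m+1) * qint (m+1)))"

definition ra :: "nat \<Rightarrow> nat \<Rightarrow> ratfun" where
  "ra m i = - (q^(i+1) * qint (m-i) * qint (m+i+2) / (q^m * qint (i+1)^2 * qint (i+2)))"

definition rb :: "nat \<Rightarrow> nat \<Rightarrow> ratfun" where
  "rb m i = - (q^(i+1) * qint (m-i) * qint (m+i+3) / (q^m * qint (i+1) * qint (i+2)^2))"

fun ca :: "nat \<Rightarrow> nat \<Rightarrow> ratfun" where
  "ca m 0 = alp m" | "ca m (Suc k) = ca m k * ra m k"

fun cb :: "nat \<Rightarrow> nat \<Rightarrow> ratfun" where
  "cb m 0 = bet m" | "cb m (Suc k) = cb m k * rb m k"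

definition R1 :: "nat \<Rightarrow> nat \<Rightarrow> ratfun" where
  "R1 m k = - (qint (2*m+3) * qint (m+k+2) / (q^(m+1) * qint (m+1) * qint (m+2) * qint (k+1)))"

definition R2 :: "nat \<Rightarrow> nat \<Rightarrow> ratfun" where
  "R2 m k = q^(m+k+2) * qint (m+1) * qint (m+2)^2 * qint (m+1-k) / (qint (2*m+3) * qint (2*m+4) * qint (m+k+2))"

lemma pow4: "(x::'a::monoid_mult) ^ 4 = x * x * x * x"
  by (simp add: numeral_eq_Suc mult.assoc)
lemma pow5: "(x::'a::monoid_mult) ^ 5 = x * x * x * x * x"
  by (simp add: numeral_eq_Suc mult.assoc)

lemmas qsimps = power_add power_mult power2_eq_square power3_eq_cube pow4 pow5
lemmas qn = power_add power_Suc mult_2 power2_eq_square power3_eq_cube pow4 pow5 power_0 power_one_right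

lemma alp_nz: "alp m \<noteq> 0" by (induction m) auto

lemma ca_zero: "k > m \<Longrightarrow> ca m k = 0"
proof (induction k)
  case 0 then show ?case by simp
next
  case (Suc k)
  show ?case
  proof (cases "k = m")
    case True then show ?thesis by (simp add: ra_def)
  next
    case False then show ?thesis using Suc by simp
  qed
qed

lemma cb_zero: "k > m \<Longrightarrow> cb m k = 0"
proof (induction k)
  case 0 then show ?case by simp
next
  case (Suc k)
  show ?case
  proof (cases "k = m")
    case True then show ?thesis by (simp add: rb_def)
  next
    case False then show ?thesis using Suc by simp
  qed
qed

lemma cb_R1: "cb m k = ca m k * R1 m k"
proof (induction k)
  case 0 then show ?case
    using qvar_pow_ne1[of "m+1"] qvar_pow_ne1[of "m+2"] qvar_pow_ne1[of "2*m+3"] alp_nz[of m]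
    unfolding cb.simps ca.simps bet_def R1_def qint_def
    by (simp add: divide_simps qsimps del: qvar_pow_ne1, (simp add: algebra_simps)?)
next
  case (Suc k)
  have "R1 m k * rb m k = ra m k * R1 m (Suc k)"
    using qvar_pow_ne1[of "m+1"] qvar_pow_ne1[of "m+2"] qvar_pow_ne1[of "2*m+3"]
      qvar_pow_ne1[of "k+1"] qvar_pow_ne1[of "k+2"] qvar_pow_ne1[of "m+k+2"] qvar_pow_ne1[of "m+k+3"]
      qvar_pow_ne1[of "m+Suc k+2"] qvar_pow_ne1[of "Suc k+1"]
    unfolding rb_def ra_def R1_def qint_def
    by (simp add: divide_simps qsimps del: qvar_pow_ne1, (simp add: algebra_simps)?)
  then show ?case using Suc by (simp add: mult.assoc)
qed

lemma ca_R2: "ca m k = ca (Suc m) k * R2 m k"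
proof (induction k)
  case 0 then show ?case
    using qvar_pow_ne1[of "m+1"] qvar_pow_ne1[of "m+2"] qvar_pow_ne1[of "2*m+3"] qvar_pow_ne1[of "2*m+4"] alp_nz[of m]
    unfolding ca.simps alp.simps R2_def
    by (simp add: divide_simps qsimps, (simp add: mult_ac)?)
next
  case (Suc k)
  have "R2 m k * ra m k = ra (Suc m) k * R2 m (Suc k)"
    unfolding ra_def R2_def
    by (simp add: divide_simps qsimps, (simp add: mult_ac)?)
  then show ?case using Suc by (simp add: mult.assoc)
qed


lemma core_ib: assumes "k \<le> m + 1"
  shows "qint (2*m+4) * qint (k+1) - qint (m+2) * qint (m+k+3) = - (q^(k+1) * qint (m+2) * qint (m+1-k))"
proof (cases "k = m + 1")
  case True
  then have a: "m + k + 3 = 2*m+4" "k+1 = m+2" "m + 1 - k = 0" by simp_all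
  show ?thesis unfolding a by (simp only: qint_0 mult_zero_right minus_zero mult.commute diff_self)
next
  case False
  with assms have "k \<le> m" by simp
  then obtain e where e: "m = k + e" using le_Suc_ex by blast
  have a: "k + e + 1 - k = e + 1" by simp
  show ?thesis unfolding e a unfolding qint_def divide_inverse by (simp only: qn) algebra
qed

lemma R2R1: "R2 m k * R1 m k = - (q^(k+1) * qint (m+2) * qint (m+1-k) / (qint (2*m+4) * qint (k+1)))"
  unfolding R1_def R2_def
  by (simp add: divide_simps qsimps, (simp add: mult_ac)?)

lemma cfc_2m3: "cfc (2*m+3) = q^(m+2) * qint (m+2) ^ 2 * qint (m+3) / (qint (2*m+4) * qint (2*m+5))"
proof -
  have "2*m+3 = 2*(m+1)+1" by simp
  then show ?thesis using cfc_odd[of "m+1"] by (simp add: numeral_eq_Suc)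
qed

lemma cR1: "cfc (2*m+3) * R1 (Suc m) k = - (qint (m+2) * qint (m+k+3) / (qint (2*m+4) * qint (k+1)))"
  unfolding cfc_2m3 R1_def
  by (simp add: divide_simps qsimps numeral_eq_Suc, (simp add: mult_ac)?)


lemma ib_ratio: assumes "k \<le> m + 1"
  shows "R2 m k * R1 m k = 1 + cfc (2*m+3) * R1 (Suc m) k"
proof (cases "k = m + 1")
  case True
  then have a: "m + k + 3 = 2*m+4" "k+1 = m+2" "m + 1 - k = 0" by simp_all
  show ?thesis unfolding R2R1 cR1 unfolding a by simp
next
  case False
  with assms have "k \<le> m" by simp
  then obtain e where e: "m = k + e" using le_Suc_ex by blast
  have a: "k + e + 1 - k = e + 1" by simp
  show ?thesis unfolding R2R1 cR1 unfolding e a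
    apply (simp add: divide_simps del: qvar_pow_ne1)
    unfolding qint_def divide_inverse by (simp only: qn) algebra
qed

lemma ib: "cb m k = ca (Suc m) k + cfc (2*m+3) * cb (Suc m) k"
proof (cases "k \<le> m + 1")
  case True
  have "cb m k = ca (Suc m) k * (R2 m k * R1 m k)" by (simp add: cb_R1 ca_R2[of m k] mult.assoc)
  also have "\<dots> = ca (Suc m) k * (1 + cfc (2*m+3) * R1 (Suc m) k)" using ib_ratio[OF True] by simp
  also have "\<dots> = ca (Suc m) k + cfc (2*m+3) * cb (Suc m) k" by (simp add: cb_R1 algebra_simps)
  finally show ?thesis .
next
  case False then show ?thesis by (simp add: ca_zero cb_zero)
qed

lemma ia0: "R2 m 0 = - (R2 m 0 * R1 m 0) * qint 1 / q + cfc (2*m+2)"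
  unfolding R2R1 unfolding cfc_even R2_def
  apply (simp add: divide_simps del: qvar_pow_ne1)
  unfolding qint_def divide_inverse by (simp only: qn) algebra

lemma iaS: assumes "K \<le> m"
  shows "ra (Suc m) K * R2 m (Suc K) = R2 m K * R1 m K / q^(Suc K) - ra (Suc m) K * R2 m (Suc K) * R1 m (Suc K) * qint (Suc K + 1) / q^(Suc K + 1) + cfc (2*m+2) * ra (Suc m) K"
proof -
  obtain e where e: "m = K + e" using assms le_Suc_ex by blast
  have a: "K + e + 1 - K = e + 1" "Suc (K + e) - K = e + 1" "K + e - K = e" "K + e + 1 - Suc K = e" by simp_all
  show ?thesis unfolding R2R1 cfc_even unfolding R2_def R1_def ra_def unfolding e a
    apply (simp add: divide_simps del: qvar_pow_ne1)
    unfolding qint_def divide_inverse by (simp only: qn) algebra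
qed

fun cbp :: "nat \<Rightarrow> nat \<Rightarrow> ratfun" where
  "cbp m 0 = 0" | "cbp m (Suc k) = cb m k / q ^ Suc k"

lemma ia: "ca m k = cbp m k - cb m k * qint (k+1) / q^(k+1) + cfc (2*m+2) * ca (Suc m) k"
proof (cases k)
  case 0
  define A where "A = ca (Suc m) 0"
  have c1: "cb m 0 = A * R2 m 0 * R1 m 0" unfolding cb_R1[of m 0] ca_R2[of m 0] A_def ..
  have "ca m 0 = A * R2 m 0" unfolding ca_R2[of m 0] A_def ..
  also have "\<dots> = A * (- (R2 m 0 * R1 m 0) * qint 1 / q + cfc (2*m+2))" using ia0 by metis
  also have "\<dots> = 0 - (A * R2 m 0 * R1 m 0) * qint (0+1) / q^(0+1) + cfc (2*m+2) * A"
    by (simp add: algebra_simps)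
  also have "\<dots> = cbp m 0 - cb m 0 * qint (0+1) / q^(0+1) + cfc (2*m+2) * ca (Suc m) 0"
    unfolding c1 cbp.simps(1) A_def ..
  finally show ?thesis using 0 by simp
next
  case (Suc K)
  show ?thesis
  proof (cases "K \<le> m")
    case True
    define A where "A = ca (Suc m) K"
    have h1: "ca (Suc m) (Suc K) = A * ra (Suc m) K" by (simp add: A_def)
    have h2: "ca m (Suc K) = A * ra (Suc m) K * R2 m (Suc K)" using ca_R2[of m "Suc K"] h1 by simp
    have h3: "cb m (Suc K) = A * ra (Suc m) K * R2 m (Suc K) * R1 m (Suc K)" using cb_R1[of m "Suc K"] h2 by simp
    have h4: "cb m K = A * R2 m K * R1 m K" using cb_R1[of m K] ca_R2[of m K] by (simp add: A_def)
    have "ca m (Suc K) = A * (ra (Suc m) K * R2 m (Suc K))" using h2 by (simp add: mult.assoc)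
    also have "\<dots> = A * (R2 m K * R1 m K / q^(Suc K) - ra (Suc m) K * R2 m (Suc K) * R1 m (Suc K) * qint (Suc K + 1) / q^(Suc K + 1) + cfc (2*m+2) * ra (Suc m) K)"
      using iaS[OF True] by metis
    also have "\<dots> = cbp m (Suc K) - cb m (Suc K) * qint (Suc K + 1) / q^(Suc K + 1) + cfc (2*m+2) * ca (Suc m) (Suc K)"
      unfolding cbp.simps h1 h3 h4 by (simp add: algebra_simps)
    finally show ?thesis using Suc by simp
  next
    case False
    then show ?thesis using Suc by (simp add: ca_zero cb_zero del: ca.simps cb.simps)
  qed
qed

definition Pp :: "nat \<Rightarrow> ratfun poly" where "Pp m = (\<Sum>k\<le>m. smult (ca m k) (posb k))"
definition Qp :: "nat \<Rightarrow> ratfun poly" where "Qp m = (\<Sum>k\<le>m. smult (cb m k) (posb k))"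

lemma Pp_ext: "m \<le> n \<Longrightarrow> Pp m = (\<Sum>k\<le>n. smult (ca m k) (posb k))"
  unfolding Pp_def by (rule sum.mono_neutral_left) (auto simp: ca_zero)

lemma Qp_ext: "m \<le> n \<Longrightarrow> Qp m = (\<Sum>k\<le>n. smult (cb m k) (posb k))"
  unfolding Qp_def by (rule sum.mono_neutral_left) (auto simp: cb_zero)

lemma pCons0_posb: "pCons 0 (posb k) = smult (1 / q^(k+1)) (posb (Suc k)) - smult (qint (k+1) / q^(k+1)) (posb k)"
proof -
  have "posb (Suc k) = smult (qint (Suc k)) (posb k) + smult (q ^ Suc k) (pCons 0 (posb k))"
    by (rule posb_Suc_split)
  then have "smult (1 / q^(k+1)) (posb (Suc k)) = smult (qint (k+1) / q^(k+1)) (posb k) + pCons 0 (posb k)"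
    by (simp add: smult_add_right del: smult_pCons)
  then show ?thesis by simp
qed

lemma smult_sum2: "smult c (\<Sum>i\<in>A. f i) = (\<Sum>i\<in>A. smult c (f i))"
  by (induction A rule: infinite_finite_induct) (auto simp: smult_add_right)

lemma pCons0_add: "pCons 0 (p + r) = pCons 0 p + pCons 0 r" by simp

lemma pCons0_sum: "pCons 0 (sum f A) = (\<Sum>i\<in>A. pCons 0 (f i))"
  by (induction A rule: infinite_finite_induct) (auto simp: pCons0_add)

lemma pCons0_smult: "pCons 0 (smult c p) = smult c (pCons 0 p)" by simp

lemma polyB: "Qp m = Pp (Suc m) + smult (cfc (2*m+3)) (Qp (Suc m))"
proof -
  have a: "smult (cfc (2*m+3)) (Qp (Suc m)) = (\<Sum>k\<le>Suc m. smult (cfc (2*m+3) * cb (Suc m) k) (posb k))"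
    unfolding Qp_def smult_sum2 by (simp only: smult_smult)
  have "Pp (Suc m) + smult (cfc (2*m+3)) (Qp (Suc m)) = (\<Sum>k\<le>Suc m. smult (ca (Suc m) k) (posb k) + smult (cfc (2*m+3) * cb (Suc m) k) (posb k))"
    unfolding a Pp_def by (simp only: sum.distrib)
  also have "\<dots> = (\<Sum>k\<le>Suc m. smult (cb m k) (posb k))"
    by (simp only: smult_add_left[symmetric] ib[symmetric])
  also have "\<dots> = Qp m" by (rule Qp_ext[symmetric]) simp
  finally show ?thesis by simp
qed

lemma polyA: "Pp m = pCons 0 (Qp m) + smult (cfc (2*m+2)) (Pp (Suc m))"
proof -
  have "pCons 0 (Qp m) = (\<Sum>k\<le>m. smult (cb m k) (pCons 0 (posb k)))"
    unfolding Qp_def pCons0_sum pCons0_smult ..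
  also have "\<dots> = (\<Sum>k\<le>m. smult (cbp m (Suc k)) (posb (Suc k)) - smult (cb m k * qint (k+1) / q^(k+1)) (posb k))"
  proof (rule sum.cong[OF refl])
    fix k
    show "smult (cb m k) (pCons 0 (posb k)) = smult (cbp m (Suc k)) (posb (Suc k)) - smult (cb m k * qint (k+1) / q^(k+1)) (posb k)"
      unfolding pCons0_posb smult_diff_right smult_smult cbp.simps by (simp only: times_divide_eq_right mult_1_right add.commute[of k 1] plus_1_eq_Suc)
  qed
  also have "\<dots> = (\<Sum>k\<le>m. smult (cbp m (Suc k)) (posb (Suc k))) - (\<Sum>k\<le>m. smult (cb m k * qint (k+1) / q^(k+1)) (posb k))"
    by (rule sum_subtractf)
  also have "(\<Sum>k\<le>m. smult (cbp m (Suc k)) (posb (Suc k))) = (\<Sum>k\<le>Suc m. smult (cbp m k) (posb k))"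
    by (subst sum.atMost_Suc_shift) (simp only: cbp.simps(1) smult_0_left add_0)
  also have "(\<Sum>k\<le>m. smult (cb m k * qint (k+1) / q^(k+1)) (posb k)) = (\<Sum>k\<le>Suc m. smult (cb m k * qint (k+1) / q^(k+1)) (posb k))"
    by (subst sum.atMost_Suc) (simp only: cb_zero[of m "Suc m", OF lessI] mult_zero_left div_0 smult_0_left add_0_right)
  finally have e1: "pCons 0 (Qp m) = (\<Sum>k\<le>Suc m. smult (cbp m k) (posb k) - smult (cb m k * qint (k+1) / q^(k+1)) (posb k))"
    by (simp only: sum_subtractf)
  have e2: "smult (cfc (2*m+2)) (Pp (Suc m)) = (\<Sum>k\<le>Suc m. smult (cfc (2*m+2) * ca (Suc m) k) (posb k))"
    unfolding Pp_def smult_sum2 by (simp only: smult_smult)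
  have "pCons 0 (Qp m) + smult (cfc (2*m+2)) (Pp (Suc m)) = (\<Sum>k\<le>Suc m. smult (cbp m k - cb m k * qint (k+1) / q^(k+1) + cfc (2*m+2) * ca (Suc m) k) (posb k))"
    unfolding e1 e2 by (simp only: sum.distrib[symmetric] smult_add_left smult_diff_left)
  also have "\<dots> = (\<Sum>k\<le>Suc m. smult (ca m k) (posb k))" by (simp only: ia[symmetric])
  also have "\<dots> = Pp m" by (rule Pp_ext[symmetric]) simp
  finally show ?thesis by simp
qed


definition TP :: "nat \<Rightarrow> nat \<Rightarrow> ratfun" where "TP m k = ca (Suc m) k * qf k / qint (m+k+2)"
definition TQ :: "nat \<Rightarrow> nat \<Rightarrow> ratfun" where "TQ m k = cb (Suc m) k * qf (Suc k) / (qint (m+k+2) * qint (m+k+3))"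
definition RR :: "nat \<Rightarrow> nat \<Rightarrow> ratfun" where "RR m K = qint (m+1-K) * qint (m+K+2) / (qint (m+1) * qint (m+2))"

lemma TP_Suc: "TP m (Suc k) = TP m k * (ra (Suc m) k * qint (k+1) * qint (m+k+2) / qint (m+k+3))"
  unfolding TP_def by (simp add: divide_simps numeral_eq_Suc, (simp add: mult_ac)?)

lemma TQ_Suc: "TQ m (Suc k) = TQ m k * (rb (Suc m) k * qint (k+2) * qint (m+k+2) / qint (m+k+4))"
  unfolding TQ_def by (simp add: divide_simps numeral_eq_Suc, (simp add: mult_ac)?)

lemma GP_ratio: assumes "K \<le> m"
  shows "RR m K + ra (Suc m) K * qint (K+1) * qint (m+K+2) / qint (m+K+3)
       = ra (Suc m) K * qint (K+1) * qint (m+K+2) / qint (m+K+3) * RR m (Suc K)"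
proof -
  obtain e where e: "m = K + e" using assms le_Suc_ex by blast
  have a: "K + e + 1 - K = e + 1" "Suc (K + e) - K = e + 1" "K + e + 1 - Suc K = e" by simp_all
  show ?thesis unfolding RR_def ra_def unfolding e a
    apply (simp add: divide_simps del: qvar_pow_ne1)
    unfolding qint_def divide_inverse by (simp only: qn) algebra
qed

lemma GQ_ratio: assumes "K \<le> m"
  shows "RR m K + rb (Suc m) K * qint (K+2) * qint (m+K+2) / qint (m+K+4)
       = rb (Suc m) K * qint (K+2) * qint (m+K+2) / qint (m+K+4) * RR m (Suc K)"
proof -
  obtain e where e: "m = K + e" using assms le_Suc_ex by blast
  have a: "K + e + 1 - K = e + 1" "Suc (K + e) - K = e + 1" "K + e + 1 - Suc K = e" by simp_all
  show ?thesis unfolding RR_def rb_def unfolding e a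
    apply (simp add: divide_simps del: qvar_pow_ne1)
    unfolding qint_def divide_inverse by (simp only: qn) algebra
qed

lemma GP_partial: "K \<le> m + 1 \<Longrightarrow> (\<Sum>k\<le>K. TP m k) = TP m K * RR m K"
proof (induction K)
  case 0 then show ?case by (simp add: RR_def)
next
  case (Suc K)
  then have "K \<le> m" by simp
  have "(\<Sum>k\<le>Suc K. TP m k) = TP m K * RR m K + TP m (Suc K)" using Suc by simp
  also have "\<dots> = TP m K * (RR m K + ra (Suc m) K * qint (K+1) * qint (m+K+2) / qint (m+K+3))"
    unfolding TP_Suc by (simp add: algebra_simps)
  also have "\<dots> = TP m (Suc K) * RR m (Suc K)"
    unfolding GP_ratio[OF \<open>K \<le> m\<close>] TP_Suc by (simp add: mult.assoc)
  finally show ?case .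
qed

lemma GQ_partial: "K \<le> m + 1 \<Longrightarrow> (\<Sum>k\<le>K. TQ m k) = TQ m K * RR m K"
proof (induction K)
  case 0 then show ?case by (simp add: RR_def)
next
  case (Suc K)
  then have "K \<le> m" by simp
  have "(\<Sum>k\<le>Suc K. TQ m k) = TQ m K * RR m K + TQ m (Suc K)" using Suc by simp
  also have "\<dots> = TQ m K * (RR m K + rb (Suc m) K * qint (K+2) * qint (m+K+2) / qint (m+K+4))"
    unfolding TQ_Suc by (simp add: algebra_simps)
  also have "\<dots> = TQ m (Suc K) * RR m (Suc K)"
    unfolding GQ_ratio[OF \<open>K \<le> m\<close>] TQ_Suc by (simp add: mult.assoc)
  finally show ?case .
qed

lemma GP: "(\<Sum>k\<le>m+1. TP m k) = 0"
  using GP_partial[of "m+1" m] by (simp add: RR_def)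

lemma GQ: "(\<Sum>k\<le>m+1. TQ m k) = 0"
  using GQ_partial[of "m+1" m] by (simp add: RR_def)


definition ivq :: ratfun where "ivq = inverse (q - 1)"
lemma ivq1: "(q - 1) * ivq = 1" by (simp add: ivq_def)
lemma qint_iv: "qint n = (q ^ n - 1) * ivq" by (simp add: qint_def ivq_def divide_inverse)

lemma negb_props: "negb m \<noteq> 0 \<and> degree (negb m) = m"
proof (induction m)
  case 0 then show ?case by simp
next
  case (Suc m)
  have l: "[:nq (Suc m), 1 / q ^ Suc m:] \<noteq> 0" "degree [:nq (Suc m), 1 / q ^ Suc m:] = 1" by simp_all
  have h: "negb (Suc m) = negb m * [:nq (Suc m), 1 / q ^ Suc m:]" by simp
  show ?case using Suc l unfolding h
    by (auto simp del: mult_pCons_right mult_pCons_left simp add: degree_mult_eq)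
qed

lemma decomp:
  assumes "\<forall>i\<ge>Suc m. coeff g i = 0"
  shows "\<exists>s r. g = smult s (negb m) + r \<and> (\<forall>i\<ge>m. coeff r i = 0)"
proof -
  have nz: "negb m \<noteq> 0" and dg: "degree (negb m) = m" using negb_props by auto
  then have lc: "coeff (negb m) m \<noteq> 0" by (metis leading_coeff_0_iff)
  define s where "s = coeff g m / coeff (negb m) m"
  define r where "r = g - smult s (negb m)"
  have "\<forall>i\<ge>m. coeff r i = 0"
  proof (intro allI impI)
    fix i assume "m \<le> i"
    show "coeff r i = 0"
    proof (cases "i = m")
      case True then show ?thesis using lc by (simp add: r_def s_def)
    next
      case False
      then have "i > m" using \<open>m \<le> i\<close> by simp
      then have "coeff (negb m) i = 0" using dg by (simp add: coeff_eq_0)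
      moreover have "coeff g i = 0" using assms \<open>i > m\<close> by simp
      ultimately show ?thesis by (simp add: r_def)
    qed
  qed
  moreover have "g = smult s (negb m) + r" by (simp add: r_def)
  ultimately show ?thesis by blast
qed

lemma Lf_lin_sum: "Lf \<beta> (pCons 0 (h * (\<Sum>k\<in>A. smult (c k) (p k)))) = (\<Sum>k\<in>A. c k * Lf \<beta> (pCons 0 (h * p k)))"
  by (simp only: sum_distrib_left mult_smult_right pCons0_sum pCons0_smult Lf_sum Lf_smult)

context fixes \<beta> :: "nat \<Rightarrow> ratfun" assumes qbc: "is_qBC \<beta>"
begin

lemma Pdir: "Lf \<beta> (pCons 0 (negb m * Pp (Suc m))) = 0"
proof -
  have "Lf \<beta> (pCons 0 (negb m * Pp (Suc m))) = (\<Sum>k\<le>Suc m. ca (Suc m) k * Am \<beta> m k)"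
    unfolding Pp_def Lf_lin_sum Am_def ..
  also have "\<dots> = (\<Sum>k\<le>m+1. gam m * TP m k)"
    by (rule sum.cong) (simp_all add: A_closed[OF qbc] TP_def)
  also have "\<dots> = 0" by (simp only: sum_distrib_left[symmetric] GP mult_zero_right)
  finally show ?thesis .
qed

lemma Qdir: "Lf \<beta> (pCons 0 (negb m * pCons 0 (Qp (Suc m)))) = 0"
proof -
  have "pCons 0 (Qp (Suc m)) = (\<Sum>k\<le>Suc m. smult (cb (Suc m) k) (pCons 0 (posb k)))"
    unfolding Qp_def pCons0_sum pCons0_smult ..
  also have "\<dots> = (\<Sum>k\<le>Suc m. smult (cb (Suc m) k / q^(k+1)) (posb (Suc k)) + smult (- (cb (Suc m) k * qint (k+1) / q^(k+1))) (posb k))"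
    by (rule sum.cong[OF refl]) (simp only: pCons0_posb diff_conv_add_uminus smult_add_right smult_minus_right smult_minus_left smult_smult times_divide_eq_right mult_1_right)
  also have "\<dots> = (\<Sum>k\<le>Suc m. smult (cb (Suc m) k / q^(k+1)) (posb (Suc k))) + (\<Sum>k\<le>Suc m. smult (- (cb (Suc m) k * qint (k+1) / q^(k+1))) (posb k))"
    by (rule sum.distrib)
  finally have e: "pCons 0 (Qp (Suc m)) = \<dots>" .
  have "Lf \<beta> (pCons 0 (negb m * pCons 0 (Qp (Suc m)))) =
     (\<Sum>k\<le>Suc m. cb (Suc m) k / q^(k+1) * Am \<beta> m (Suc k)) + (\<Sum>k\<le>Suc m. - (cb (Suc m) k * qint (k+1) / q^(k+1)) * Am \<beta> m k)"
    unfolding e distrib_left pCons0_add Lf_add Lf_lin_sum Am_def ..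
  also have "\<dots> = (\<Sum>k\<le>Suc m. cb (Suc m) k / q^(k+1) * Am \<beta> m (Suc k) - (cb (Suc m) k * qint (k+1) / q^(k+1)) * Am \<beta> m k)"
    by (simp add: sum.distrib[symmetric])
  also have "\<dots> = (\<Sum>k\<le>m+1. (- (gam m * q^(m+1))) * TQ m k)"
  proof (rule sum.cong)
    fix k
    show "cb (Suc m) k / q^(k+1) * Am \<beta> m (Suc k) - (cb (Suc m) k * qint (k+1) / q^(k+1)) * Am \<beta> m k = (- (gam m * q^(m+1))) * TQ m k"
    proof -
      have r: "qint (m + Suc k + 2) = qint (m+k+2) + q^(m+k+2)" "qint (m + k + 3) = qint (m+k+2) + q^(m+k+2)"
        using qint_Suc[of "m+k+2"] by (simp_all add: numeral_eq_Suc)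
      have nz: "qint (m+k+2) + q^(m+k+2) \<noteq> 0" by (metis qint_Suc qint_Suc_nz)
      show ?thesis using nz
      unfolding A_closed[OF qbc] TQ_def qf.simps r
      by (simp add: divide_simps qn del: qvar_pow_ne1, (simp add: algebra_simps)?)
    qed
  qed simp
  also have "\<dots> = 0" by (simp only: sum_distrib_left[symmetric] GQ mult_zero_right)
  finally show ?thesis .
qed

lemma pCons0_diff: "pCons 0 (a - b) = pCons 0 a - pCons 0 b" by simp

definition OL :: "ratfun poly \<Rightarrow> nat \<Rightarrow> bool" where
  "OL R n \<longleftrightarrow> (\<forall>g. (\<forall>i\<ge>n. coeff g i = 0) \<longrightarrow> Lf \<beta> (pCons 0 (g * R)) = 0)"

lemma Lf_split: "Lf \<beta> (pCons 0 ((smult s N + r) * R)) = s * Lf \<beta> (pCons 0 (N * R)) + Lf \<beta> (pCons 0 (r * R))"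
  by (simp only: distrib_right mult_smult_left pCons0_add pCons0_smult Lf_add Lf_smult)

lemma orth: "OL (Pp m) m \<and> OL (pCons 0 (Qp m)) m"
proof (induction m)
  case 0
  have z: "g = 0" if "\<forall>i\<ge>0. coeff g i = 0" for g :: "ratfun poly" using that by (simp add: poly_eqI)
  show ?case unfolding OL_def
  proof (intro conjI allI impI)
    fix g :: "ratfun poly" assume "\<forall>i\<ge>0. coeff g i = 0"
    then have "g = 0" by (rule z)
    then show "Lf \<beta> (pCons 0 (g * Pp 0)) = 0" by simp
  next
    fix g :: "ratfun poly" assume "\<forall>i\<ge>0. coeff g i = 0"
    then have "g = 0" by (rule z)
    then show "Lf \<beta> (pCons 0 (g * pCons 0 (Qp 0))) = 0" by simp
  qed
next
  case (Suc m)
  have IP: "OL (Pp m) m" and IQ: "OL (pCons 0 (Qp m)) m" using Suc by auto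
  have c1: "cfc (2*m+2) \<noteq> 0" unfolding cfc_even by simp
  have c2: "cfc (2*m+3) \<noteq> 0" unfolding cfc_2m3 by simp
  have P': "OL (Pp (Suc m)) (Suc m)"
    unfolding OL_def
  proof (intro allI impI)
    fix g :: "ratfun poly" assume g: "\<forall>i\<ge>Suc m. coeff g i = 0"
    obtain s r where sr: "g = smult s (negb m) + r" and r: "\<forall>i\<ge>m. coeff r i = 0" using decomp[OF g] by blast
    have "cfc (2*m+2) * Lf \<beta> (pCons 0 (r * Pp (Suc m))) = Lf \<beta> (pCons 0 (r * (Pp m - pCons 0 (Qp m))))"
      using polyA[of m] by (simp only: pCons0_smult Lf_smult[symmetric] mult_smult_right[symmetric]) (simp add: algebra_simps)
    also have "\<dots> = Lf \<beta> (pCons 0 (r * Pp m)) - Lf \<beta> (pCons 0 (r * pCons 0 (Qp m)))"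
      by (simp only: right_diff_distrib pCons0_diff Lf_diff)
    also have "\<dots> = 0" using IP IQ r unfolding OL_def by simp
    finally have "Lf \<beta> (pCons 0 (r * Pp (Suc m))) = 0" using c1 by simp
    then show "Lf \<beta> (pCons 0 (g * Pp (Suc m))) = 0" unfolding sr Lf_split Pdir by simp
  qed
  have Q': "OL (pCons 0 (Qp (Suc m))) (Suc m)"
    unfolding OL_def
  proof (intro allI impI)
    fix g :: "ratfun poly" assume g: "\<forall>i\<ge>Suc m. coeff g i = 0"
    obtain s r where sr: "g = smult s (negb m) + r" and r: "\<forall>i\<ge>m. coeff r i = 0" using decomp[OF g] by blast
    have r': "\<forall>i\<ge>Suc m. coeff (pCons 0 r) i = 0" using r by (auto simp: coeff_pCons split: nat.splits)
    have "cfc (2*m+3) * Lf \<beta> (pCons 0 (r * pCons 0 (Qp (Suc m)))) = Lf \<beta> (pCons 0 (r * (pCons 0 (Qp m) - pCons 0 (Pp (Suc m)))))"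
      using polyB[of m] by (simp only: pCons0_smult Lf_smult[symmetric] mult_smult_right[symmetric]) (simp add: algebra_simps)
    also have "\<dots> = Lf \<beta> (pCons 0 (r * pCons 0 (Qp m))) - Lf \<beta> (pCons 0 (pCons 0 r * Pp (Suc m)))"
      by (simp only: right_diff_distrib pCons0_diff Lf_diff mult.commute[of "pCons 0 r"] mult_pCons_left smult_0_left add_0 mult.commute[of r])
    also have "\<dots> = 0"
    proof -
      have a: "Lf \<beta> (pCons 0 (pCons 0 r * Pp (Suc m))) = 0" using P' r' unfolding OL_def by blast
      have b: "Lf \<beta> (pCons 0 (r * pCons 0 (Qp m))) = 0" using IQ r unfolding OL_def by blast
      show ?thesis by (simp only: a b diff_self)
    qed
    finally have "Lf \<beta> (pCons 0 (r * pCons 0 (Qp (Suc m)))) = 0" using c2 by simp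
    then show "Lf \<beta> (pCons 0 (g * pCons 0 (Qp (Suc m)))) = 0" unfolding sr Lf_split Qdir by simp
  qed
  show ?case using P' Q' by simp
qed

end



definition Gs :: "(nat \<Rightarrow> ratfun) \<Rightarrow> ratfun poly \<Rightarrow> ratfun fps" where
  "Gs \<beta> R = Abs_fps (\<lambda>n. Lf \<beta> (pCons 0 (monom 1 n * R)) / \<beta> 1)"

definition Kt :: "(nat \<Rightarrow> ratfun) \<Rightarrow> nat \<Rightarrow> ratfun fps" where
  "Kt \<beta> i = (if i = 0 then 1 else if odd i then fps_shift ((i - 1) div 2) (Gs \<beta> (Pp ((i - 1) div 2)))
      else fps_shift ((i - 2) div 2) (Gs \<beta> (pCons 0 (Qp ((i - 2) div 2)))))"

lemma Kt_0: "Kt \<beta> 0 = 1" by (simp add: Kt_def)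
lemma Kt_odd: "Kt \<beta> (2*m+1) = fps_shift m (Gs \<beta> (Pp m))" by (simp add: Kt_def)
lemma Kt_even: "Kt \<beta> (2*m+2) = fps_shift m (Gs \<beta> (pCons 0 (Qp m)))" by (simp add: Kt_def)

lemma Gs_nth: "Gs \<beta> R $ n = Lf \<beta> (pCons 0 (monom 1 n * R)) / \<beta> 1" by (simp add: Gs_def)

lemma Gs_add: "Gs \<beta> (A + B) $ n = Gs \<beta> A $ n + Gs \<beta> B $ n"
  by (simp only: Gs_nth distrib_left pCons0_add Lf_add add_divide_distrib)

lemma Gs_smult: "Gs \<beta> (smult c A) $ n = c * Gs \<beta> A $ n"
  by (simp only: Gs_nth mult_smult_right pCons0_smult Lf_smult times_divide_eq_right)

lemma Gs_pc: "Gs \<beta> (pCons 0 R) $ n = Gs \<beta> R $ Suc n"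
proof -
  have "monom (1::ratfun) n * pCons 0 R = monom 1 (Suc n) * R"
    by (simp add: monom_Suc)
  then show ?thesis by (simp only: Gs_nth)
qed

lemma X_nth: "(fps_const c * fps_X * (F :: ratfun fps)) $ n = (if n = 0 then 0 else c * F $ (n - 1))"
proof -
  have "(fps_const c * fps_X * F) $ n = c * ((fps_X * F) $ n)"
    by (subst mult.assoc) (rule fps_mult_left_const_nth)
  then show ?thesis by (simp only: fps_X_mult_nth) simp
qed

lemma mult_low_zero:
  fixes A D :: "ratfun fps"
  assumes "\<forall>k<N. D $ k = 0" "k < N"
  shows "(A * D) $ k = 0"
proof -
  have "(A * D) $ k = (\<Sum>i=0..k. A $ i * D $ (k - i))" by (rule fps_mult_nth)
  also have "\<dots> = 0" using assms by (intro sum.neutral) auto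
  finally show ?thesis .
qed

lemma inv_agree:
  fixes F G :: "ratfun fps"
  assumes F0: "F $ 0 \<noteq> 0" and ag: "\<forall>k<N. F $ k = G $ k" and k: "k < N"
  shows "inverse F $ k = inverse G $ k"
proof -
  have G0: "G $ 0 \<noteq> 0" using F0 ag k by (metis le0 le_less_trans)
  have "inverse F * inverse G * (G - F) = inverse F * (inverse G * G) - inverse G * (inverse F * F)"
    by (simp add: algebra_simps)
  also have "\<dots> = inverse F - inverse G" using F0 G0 by (simp add: inverse_mult_eq_1)
  finally have e: "inverse F - inverse G = inverse F * inverse G * (G - F)" by simp
  have "\<forall>k<N. (G - F) $ k = 0" using ag by simp
  then have "(inverse F * inverse G * (G - F)) $ k = 0" using k by (rule mult_low_zero)
  then have "(inverse F - inverse G) $ k = 0" using e by simp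
  then show ?thesis by simp
qed

context fixes \<beta> :: "nat \<Rightarrow> ratfun" assumes qbc: "is_qBC \<beta>"
begin

lemma orthP: "n < m \<Longrightarrow> Gs \<beta> (Pp m) $ n = 0"
proof -
  assume "n < m"
  then have "\<forall>i\<ge>m. coeff (monom (1::ratfun) n) i = 0" by (auto simp: coeff_monom)
  moreover have "OL \<beta> (Pp m) m" using orth[OF qbc, of m] by simp
  then have "\<forall>g. (\<forall>i\<ge>m. coeff g i = 0) \<longrightarrow> Lf \<beta> (pCons 0 (g * (Pp m))) = 0" by (simp only: OL_def[OF qbc])
  ultimately have "Lf \<beta> (pCons 0 (monom 1 n * (Pp m))) = 0" by blast
  then show ?thesis unfolding Gs_nth by simp
qed

lemma orthQ: "n < m \<Longrightarrow> Gs \<beta> (pCons 0 (Qp m)) $ n = 0"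
proof -
  assume "n < m"
  then have "\<forall>i\<ge>m. coeff (monom (1::ratfun) n) i = 0" by (auto simp: coeff_monom)
  moreover have "OL \<beta> (pCons 0 (Qp m)) m" using orth[OF qbc, of m] by simp
  then have "\<forall>g. (\<forall>i\<ge>m. coeff g i = 0) \<longrightarrow> Lf \<beta> (pCons 0 (g * (pCons 0 (Qp m)))) = 0" by (simp only: OL_def[OF qbc])
  ultimately have "Lf \<beta> (pCons 0 (monom 1 n * (pCons 0 (Qp m)))) = 0" by blast
  then show ?thesis unfolding Gs_nth by simp
qed


lemma Pp0: "Pp 0 = 1" by (simp add: Pp_def)
lemma Qp0: "Qp 0 = smult (bet 0) 1" by (simp add: Qp_def)

lemma Gs1_0: "Gs \<beta> 1 $ 0 = 1"
proof -
  have "Gs \<beta> 1 $ 0 = Lf \<beta> (monom 1 1) / \<beta> 1" by (simp add: Gs_nth monom_Suc monom_0)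
  also have "\<dots> = 1" using beta1_nz[OF qbc] by (simp add: Lf_monom)
  finally show ?thesis .
qed

lemma cfc1_bet0: "cfc (Suc 0) * bet 0 = -1"
proof -
  have "cfc (Suc 0) = q / qint 3" using cfc_odd[of 0] by (simp add: numeral_eq_Suc)
  moreover have "bet 0 = - (qint 3 / q)" by (simp add: bet_def numeral_eq_Suc)
  moreover have "qint 3 \<noteq> 0" by simp
  ultimately show ?thesis by simp
qed

lemma Kt_rel: "Kt \<beta> i = Kt \<beta> (Suc i) + fps_const (cfc (Suc i)) * fps_X * Kt \<beta> (Suc (Suc i))"
proof (rule fps_ext)
  fix n
  show "Kt \<beta> i $ n = (Kt \<beta> (Suc i) + fps_const (cfc (Suc i)) * fps_X * Kt \<beta> (Suc (Suc i))) $ n"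
  proof -
    have cases: "i = 0 \<or> (\<exists>m. i = 2*m+1) \<or> (\<exists>m. i = 2*m+2)"
      by presburger
    moreover
    { assume i: "i = 0"
      have K1: "Kt \<beta> (Suc 0) = Gs \<beta> 1" using Kt_odd[of \<beta> 0] by (simp add: Pp0)
      have K2: "Kt \<beta> (Suc (Suc 0)) = Gs \<beta> (pCons 0 (smult (bet 0) 1))" using Kt_even[of \<beta> 0] by (simp add: Qp0 del: smult_pCons)
      have ?thesis
      proof (cases n)
        case 0 then show ?thesis using i K1 Gs1_0 by (simp add: Kt_0 X_nth)
      next
        case (Suc n')
        have "Gs \<beta> 1 $ Suc n' + cfc 1 * Gs \<beta> (pCons 0 (smult (bet 0) 1)) $ n' = Gs \<beta> 1 $ Suc n' * (1 + cfc 1 * bet 0)"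
          by (simp only: Gs_pc Gs_smult) (simp add: algebra_simps)
        also have "\<dots> = 0" by (simp add: cfc1_bet0)
        finally show ?thesis using i Suc K1 K2 by (simp add: Kt_0 X_nth)
      qed }
    moreover
    { fix m assume i: "i = 2*m+1"
      have e: "Suc i = 2*m+2" "Suc (Suc i) = 2*(Suc m)+1" using i by simp_all
      have pa: "Gs \<beta> (Pp m) $ j = Gs \<beta> (pCons 0 (Qp m)) $ j + cfc (2*m+2) * Gs \<beta> (Pp (Suc m)) $ j" for j
        by (subst polyA) (simp only: Gs_add Gs_smult)
      have ?thesis
      proof (cases n)
        case 0
        then show ?thesis unfolding e(2) unfolding e(1) unfolding i Kt_odd Kt_even using pa[of m] orthP[of m "Suc m"] by (simp add: X_nth)
      next
        case (Suc n')
        then show ?thesis unfolding e(2) unfolding e(1) unfolding i Kt_odd Kt_even using pa[of "n+m"] by (simp add: X_nth)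
      qed }
    moreover
    { fix m assume i: "i = 2*m+2"
      have e: "Suc i = 2*(Suc m)+1" "Suc (Suc i) = 2*(Suc m)+2" using i by simp_all
      have pb: "Gs \<beta> (Qp m) $ j = Gs \<beta> (Pp (Suc m)) $ j + cfc (2*m+3) * Gs \<beta> (Qp (Suc m)) $ j" for j
        by (subst polyB) (simp only: Gs_add Gs_smult)
      have c3: "cfc (2*m+3) = cfc (Suc (Suc (Suc (2*m))))" by (simp add: numeral_eq_Suc)
      have ?thesis
      proof (cases n)
        case 0
        then show ?thesis unfolding e(2) unfolding e(1) unfolding i Kt_odd Kt_even Gs_pc using pb[of "Suc m"] orthQ[of m "Suc m"] Gs_pc[of \<beta> "Qp (Suc m)" m]
          by (simp add: X_nth Gs_pc)
      next
        case (Suc n')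
        then show ?thesis unfolding e(2) unfolding e(1) unfolding i Kt_odd Kt_even Gs_pc using pb[of "Suc (n+m)"] c3 by (simp add: X_nth Gs_pc)
      qed }
    ultimately show ?thesis by blast
  qed
qed

lemma Kt_const: "Kt \<beta> i $ 0 = 1"
proof (induction i)
  case 0 then show ?case by (simp add: Kt_0)
next
  case (Suc i)
  have "Kt \<beta> i $ 0 = (Kt \<beta> (Suc i) + fps_const (cfc (Suc i)) * fps_X * Kt \<beta> (Suc (Suc i))) $ 0"
    by (subst Kt_rel) simp
  then show ?case using Suc by (simp add: X_nth)
qed


lemma tail_eq: "Kt \<beta> (Suc i) * inverse (Kt \<beta> i) = inverse (1 + fps_const (cfc (Suc i)) * fps_X * (Kt \<beta> (Suc (Suc i)) * inverse (Kt \<beta> (Suc i))))"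
proof -
  let ?a = "Kt \<beta> i" and ?b = "Kt \<beta> (Suc i)" and ?c = "Kt \<beta> (Suc (Suc i))" and ?C = "fps_const (cfc (Suc i)) * fps_X"
  have b0: "?b $ 0 \<noteq> 0" by (simp add: Kt_const)
  have "1 + ?C * (?c * inverse ?b) = (?b + ?C * ?c) * inverse ?b"
    using b0 by (simp add: algebra_simps inverse_mult_eq_1')
  also have "?b + ?C * ?c = ?a" using Kt_rel[of i] by simp
  finally have "inverse (1 + ?C * (?c * inverse ?b)) = inverse (?a * inverse ?b)" by simp
  also have "\<dots> = inverse ?a * ?b" using b0 by (simp add: fps_inverse_mult)
  finally show ?thesis by (simp add: mult.commute)
qed

lemma conv: "\<forall>i n. n < N \<longrightarrow> cfrac cfc (Suc i) N $ n = (Kt \<beta> (Suc i) * inverse (Kt \<beta> i)) $ n"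
proof (induction N)
  case 0 then show ?case by simp
next
  case (Suc N)
  show ?case
  proof (intro allI impI)
    fix i n assume n: "n < Suc N"
    let ?C = "fps_const (cfc (Suc i)) * fps_X"
    let ?F = "1 + ?C * cfrac cfc (Suc (Suc i)) N"
    let ?G = "1 + ?C * (Kt \<beta> (Suc (Suc i)) * inverse (Kt \<beta> (Suc i)))"
    have ag: "\<forall>k<Suc N. ?F $ k = ?G $ k"
    proof (intro allI impI)
      fix k assume k: "k < Suc N"
      show "?F $ k = ?G $ k"
      proof (cases k)
        case 0 then show ?thesis by (simp add: X_nth)
      next
        case (Suc k')
        then have "k' < N" using k by simp
        then have "cfrac cfc (Suc (Suc i)) N $ k' = (Kt \<beta> (Suc (Suc i)) * inverse (Kt \<beta> (Suc i))) $ k'"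
          using Suc.IH by blast
        then show ?thesis using Suc by (simp add: X_nth)
      qed
    qed
    have F0: "?F $ 0 \<noteq> 0" by (simp add: X_nth)
    have "cfrac cfc (Suc i) (Suc N) $ n = inverse ?F $ n" by simp
    also have "\<dots> = inverse ?G $ n" using inv_agree[OF F0 ag n] .
    also have "\<dots> = (Kt \<beta> (Suc i) * inverse (Kt \<beta> i)) $ n" using tail_eq[of i] by simp
    finally show "cfrac cfc (Suc i) (Suc N) $ n = (Kt \<beta> (Suc i) * inverse (Kt \<beta> i)) $ n" .
  qed
qed

lemma final_coeff: "n < N \<Longrightarrow> cfrac cfc 1 N $ n = \<beta> (n + 1) / \<beta> 1"
proof -
  assume "n < N"
  then have "cfrac cfc (Suc 0) N $ n = (Kt \<beta> (Suc 0) * inverse (Kt \<beta> 0)) $ n" using conv[of N] by blast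
  also have "\<dots> = Gs \<beta> 1 $ n" using Kt_odd[of \<beta> 0] by (simp add: Kt_0 Pp0)
  also have "\<dots> = \<beta> (n + 1) / \<beta> 1" by (simp add: Gs_nth monom_Suc[symmetric] Lf_monom del: monom_Suc)
  finally show ?thesis by simp
qed

end

theorem mainTheorem9:
  fixes \<beta> :: "nat \<Rightarrow> ratfun"
  assumes "is_qBC \<beta>"
  shows "(\<lambda>N. cfrac cfc 1 N) \<longlonglongrightarrow> Abs_fps (\<lambda>n. \<beta> (n + 1) / \<beta> 1)"
proof (rule tendsto_fpsI)
  fix n
  show "eventually (\<lambda>N. cfrac cfc 1 N $ n = Abs_fps (\<lambda>n. \<beta> (n + 1) / \<beta> 1) $ n) sequentially"
    using final_coeff[OF assms] by (intro eventually_sequentiallyI[of "Suc n"]) simp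
qed


end
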